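(* Let $x_1,\dots,x_n,y_1,\dots,y_n\in\mathbb C$ and define the $n\times n$ matrix $M$ by $$\sum_{k=1}^nM_{jk}u^{k-1}=\prod_{1\le i<j}(u-x_i)\prod_{j<i\le n}(u+y_i),\qquad j=1,\dots,n.$$ Then $\det M=\prod_{1\le i<j\le n}(x_i+y_j)$. *)

theory Defs
  imports "HOL-Computational_Algebra.Polynomial" "Jordan_Normal_Form.Determinant"
begin

text \<open>Indices are 0-based: x i, y i for i < n correspond to x_{i+1}, y_{i+1}.\<close>

definition row_poly :: "nat \<Rightarrow> (nat \<Rightarrow> complex) \<Rightarrow> (nat \<Rightarrow> complex) \<Rightarrow> nat \<Rightarrow> complex poly" where
  "row_poly n x y j = (\<Prod>i<j. [:- x i, 1:]) * (\<Prod>i\<in>{j<..<n}. [:y i, 1:])"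

definition M_mat :: "nat \<Rightarrow> (nat \<Rightarrow> complex) \<Rightarrow> (nat \<Rightarrow> complex) \<Rightarrow> complex mat" where
  "M_mat n x y = mat n n (\<lambda>(j, k). coeff (row_poly n x y j) k)"

end

theory Submission imports Defs begin

lemma deg_row: assumes "j < m" shows "degree (row_poly m x y j) \<le> m - 1"
proof -
  have "degree (row_poly m x y j) \<le> degree (\<Prod>i<j. [:- x i, 1:]) + degree (\<Prod>i\<in>{j<..<m}. [:y i, 1:])"
    unfolding row_poly_def by (rule degree_mult_le)
  also have "degree (\<Prod>i<j. [:- x i, 1:]) \<le> (\<Sum>i<j. degree [:- x i, (1::complex):])"
    using degree_prod_sum_le[of "{..<j}" "\<lambda>i. [:- x i, (1::complex):]"] by (simp add: o_def)
  also have "(\<Sum>i<j. degree [:- x i, (1::complex):]) = j" by simp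
  also have "degree (\<Prod>i\<in>{j<..<m}. [:y i, 1:]) \<le> (\<Sum>i\<in>{j<..<m}. degree [:y i, (1::complex):])"
    using degree_prod_sum_le[of "{j<..<m}" "\<lambda>i. [:y i, (1::complex):]"] by (simp add: o_def)
  also have "(\<Sum>i\<in>{j<..<m}. degree [:y i, (1::complex):]) = m - 1 - j" by simp
  finally show ?thesis using assms by simp
qed

lemma coeff_row_0: assumes "j < m" shows "coeff (row_poly m x y j) m = 0"
  using deg_row[OF assms, of x y] assms by (intro coeff_eq_0) simp

lemma row_last: "row_poly (Suc m) x y m = (\<Prod>i<m. [:- x i, 1:])"
  unfolding row_poly_def by (simp add: greaterThanLessThan_upt)

lemma coeff_last: "coeff (row_poly (Suc m) x y m) m = 1"
proof -
  have d: "degree (\<Prod>i<m. [:- x i, (1::complex):]) = m"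
    by (subst degree_prod_eq_sum_degree) auto
  have l: "lead_coeff (\<Prod>i<m. [:- x i, (1::complex):]) = 1"
    by (simp add: lead_coeff_prod)
  show ?thesis unfolding row_last using d l by simp
qed

lemma row_diff: assumes "j < m"
  shows "row_poly (Suc m) x y j - row_poly (Suc m) x y (Suc j)
    = smult (x j + y (Suc j)) (row_poly m x (\<lambda>i. y (Suc i)) j)"
proof -
  define A where "A = (\<Prod>i<j. [:- x i, (1::complex):])"
  define B where "B = (\<Prod>i\<in>{Suc j<..<Suc m}. [:y i, (1::complex):])"
  have e1: "{j<..<Suc m} = insert (Suc j) {Suc j<..<Suc m}" using assms by auto
  have P1: "row_poly (Suc m) x y j = A * ([:y (Suc j), 1:] * B)"
    unfolding row_poly_def A_def B_def e1 by simp
  have P2: "row_poly (Suc m) x y (Suc j) = A * [:- x j, 1:] * B"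
    unfolding row_poly_def A_def B_def by simp
  have "(\<Prod>i\<in>{j<..<m}. [:y (Suc i), 1:]) = B"
    unfolding B_def
  proof -
    have "{Suc j<..<Suc m} = Suc ` {j<..<m}" by (auto simp: image_iff gr0_conv_Suc Suc_less_eq2) 
    then show "(\<Prod>i\<in>{j<..<m}. [:y (Suc i), 1:]) = (\<Prod>i\<in>{Suc j<..<Suc m}. [:y i, (1::complex):])"
      by (simp add: prod.reindex)
  qed
  then have P3: "row_poly m x (\<lambda>i. y (Suc i)) j = A * B" unfolding row_poly_def A_def by simp
  show ?thesis unfolding P1 P2 P3
    by (simp add: algebra_simps smult_add_left) 
qed
lemma sum_bidiag: fixes f :: "nat \<Rightarrow> complex" assumes "i < n"
  shows "(\<Sum>l\<in>{0..<n}. (if l = i then 1 else if l = Suc i then -1 else 0) * f l)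
     = f i - (if Suc i < n then f (Suc i) else 0)"
proof -
  have "(\<Sum>l\<in>{0..<n}. (if l = i then 1 else if l = Suc i then -1 else 0) * f l)
     = (\<Sum>l\<in>{0..<n}. (if l = i then f l else 0) - (if l = Suc i then f l else 0))"
    by (rule sum.cong) auto
  also have "\<dots> = f i - (if Suc i < n then f (Suc i) else 0)"
    using assms by (simp add: sum_subtractf)
  finally show ?thesis .
qed

theorem lemma5p2:
  fixes n :: nat and x y :: "nat \<Rightarrow> complex"
  shows "det (M_mat n x y) = (\<Prod>j<n. \<Prod>i<j. x i + y j)"
proof (induction n arbitrary: y)
  case 0
  have "M_mat 0 x y \<in> carrier_mat 0 0" unfolding M_mat_def by simp
  then show ?case by simp
next
  case (Suc m)
  define M where "M = M_mat (Suc m) x y"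
  define M' where "M' = M_mat m x (\<lambda>i. y (Suc i))"
  define c where "c = (\<lambda>i. x i + y (Suc i))"
  define D where "D = mat (Suc m) (Suc m) (\<lambda>(i,l). if l = i then 1 else if l = Suc i then -1 else (0::complex))"
  define N where "N = mat (Suc m) (Suc m) (\<lambda>(i,k). if i < m then c i * coeff (row_poly m x (\<lambda>i. y (Suc i)) i) k
     else coeff (row_poly (Suc m) x y m) k)"
  have Mc: "M \<in> carrier_mat (Suc m) (Suc m)" unfolding M_def M_mat_def by simp
  have M'c: "M' \<in> carrier_mat m m" unfolding M'_def M_mat_def by simp
  have Dc: "D \<in> carrier_mat (Suc m) (Suc m)" unfolding D_def by simp
  have Nc: "N \<in> carrier_mat (Suc m) (Suc m)" unfolding N_def by simp
  have ND: "N = D * M"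
  proof (rule eq_matI)
    fix i k assume i: "i < dim_row (D * M)" and k: "k < dim_col (D * M)"
    then have i: "i < Suc m" and k: "k < Suc m" using Dc Mc by auto
    have "(D * M) $$ (i,k) = (\<Sum>l\<in>{0..<Suc m}. (if l = i then 1 else if l = Suc i then -1 else 0) * coeff (row_poly (Suc m) x y l) k)"
      using i k unfolding D_def M_def M_mat_def by (simp add: scalar_prod_def)
    also have "\<dots> = coeff (row_poly (Suc m) x y i) k - (if Suc i < Suc m then coeff (row_poly (Suc m) x y (Suc i)) k else 0)"
      using i by (rule sum_bidiag)
    also have "\<dots> = N $$ (i,k)"
    proof (cases "i < m")
      case True
      then show ?thesis using i k row_diff[OF True, of x y]
        unfolding N_def c_def by (simp add: coeff_diff[symmetric])
    next
      case False
      then have "i = m" using i by simp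
      then show ?thesis using k unfolding N_def by simp
    qed
    finally show "N $$ (i,k) = (D * M) $$ (i,k)" by simp
  qed (use Dc Mc Nc in auto)
  have "upper_triangular D" unfolding D_def upper_triangular_def by auto
  then have detD: "det D = 1" using det_upper_triangular[OF _ Dc]
    by (simp add: prod_list_diag_prod D_def)
  have "det N = det M" using det_mult[OF Dc Mc] ND detD by simp
  have "det N = (\<Sum>i<Suc m. N $$ (i,m) * cofactor N i m)"
    using laplace_expansion_column[OF Nc, of m] by simp
  also have "\<dots> = N $$ (m,m) * cofactor N m m"
    by (subst sum.remove[of _ m]) (auto simp: N_def coeff_row_0 intro!: sum.neutral)
  also have "\<dots> = det (mat_delete N m m)"
    by (simp add: N_def coeff_last cofactor_def)
  also have "mat_delete N m m = mat\<^sub>r m m (\<lambda>i. c i \<cdot>\<^sub>v row M' i)"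
    by (rule eq_matI) (auto simp: mat_delete_def N_def M'_def M_mat_def)
  also have "det \<dots> = prod c {0..<m} * det (mat\<^sub>r m m (\<lambda>i. row M' i))"
    by (rule det_rows_mul) (use M'c in auto)
  also have "mat\<^sub>r m m (\<lambda>i. row M' i) = M'"
    by (rule eq_matI) (use M'c in auto)
  also have "det M' = (\<Prod>j<m. \<Prod>i<j. x i + y (Suc j))"
    unfolding M'_def by (rule Suc.IH)
  also have "prod c {0..<m} * (\<Prod>j<m. \<Prod>i<j. x i + y (Suc j)) = (\<Prod>j<Suc m. \<Prod>i<j. x i + y j)"
  proof -
    have "(\<Prod>j<Suc m. \<Prod>i<j. x i + y j) = (\<Prod>i<0. x i + y 0) * (\<Prod>j<m. \<Prod>i<Suc j. x i + y (Suc j))"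
      by (rule prod.lessThan_Suc_shift)
    also have "\<dots> = (\<Prod>j<m. c j * (\<Prod>i<j. x i + y (Suc j)))"
      by (simp add: c_def mult.commute)
    finally show ?thesis by (simp add: atLeast0LessThan prod.distrib)
  qed
  finally show ?case using \<open>det N = det M\<close> M_def by simp
qed

end
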